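(* Let $K(q,t)=\sum_{p\ge0}q^{2p^2}t^{2p(p-1)}(1+q^{8p+12}t^{8p+5})\prod_{j=1}^{p}\frac{1+q^{2j+4}t^{2j+1}}{1-q^{2j}t^{2j}}$, viewed as a power series in $q$ whose coefficients are polynomials in $t$. Then $K(q,-1)=\dfrac{1}{1-q^2}$ in $\mathbb{Z}[[q]]$; equivalently $\sum_{p\ge0}q^{2p^2}(1-q^{2p+2})(1-q^{2p+4})(1-q^{8p+12})=1-q^4$. *)

theory Defs
  imports "HOL-Computational_Algebra.Computational_Algebra"
begin

text \<open>For f with constant term 1, fps_right_inverse f 1 is the (genuine) inverse 1/f in the
  power series ring over the commutative ring Z[t].\<close>

definition tvar :: "int poly" where "tvar = [:0, 1:]"

definition Kterm :: "nat \<Rightarrow> int poly fps" where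
  "Kterm p =
     fps_X ^ (2 * p\<^sup>2) * fps_const (tvar ^ (2 * p * (p - 1)))
     * (1 + fps_const (tvar ^ (8 * p + 5)) * fps_X ^ (8 * p + 12))
     * (\<Prod>j\<in>{1..p}. (1 + fps_const (tvar ^ (2 * j + 1)) * fps_X ^ (2 * j + 4))
          * fps_right_inverse (1 - fps_const (tvar ^ (2 * j)) * fps_X ^ (2 * j)) 1)"

text \<open>The p-th summand has q-order at least 2p^2 >= p, so the n-th coefficient of the
  infinite sum over p is the finite sum over p <= n.\<close>
definition K :: "int poly fps" where
  "K = Abs_fps (\<lambda>n. \<Sum>p\<le>n. Kterm p $ n)"

definition K_at_minus1 :: "int fps" where
  "K_at_minus1 = Abs_fps (\<lambda>n. poly (K $ n) (-1))"

end

theory Submission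
  imports Defs
begin

definition ev :: "int poly fps \<Rightarrow> int fps" where
  "ev f = Abs_fps (\<lambda>n. poly (f$n) (-1))"

lemma ev_nth[simp]: "ev f $ n = poly (f$n) (-1)" by (simp add: ev_def)

lemma ev_add[simp]: "ev (f + g) = ev f + ev g" by (rule fps_ext) simp
lemma ev_diff[simp]: "ev (f - g) = ev f - ev g" by (rule fps_ext) simp
lemma ev_zero[simp]: "ev 0 = 0" by (rule fps_ext) simp
lemma ev_one[simp]: "ev 1 = 1" by (rule fps_ext) simp
lemma ev_X[simp]: "ev fps_X = fps_X" by (rule fps_ext) (simp add: fps_X_def)
lemma ev_const[simp]: "ev (fps_const c) = fps_const (poly c (-1))" by (rule fps_ext) simp
lemma ev_mult[simp]: "ev (f * g) = ev f * ev g"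
  by (rule fps_ext) (simp add: fps_mult_nth poly_sum)
lemma ev_power[simp]: "ev (f ^ k) = ev f ^ k" by (induction k) simp_all
lemma ev_prod[simp]: "ev (\<Prod>j\<in>A. f j) = (\<Prod>j\<in>A. ev (f j))"
  by (induction A rule: infinite_finite_induct) simp_all
lemma ev_sum[simp]: "ev (\<Sum>j\<in>A. f j) = (\<Sum>j\<in>A. ev (f j))"
  by (induction A rule: infinite_finite_induct) simp_all

lemma rinv_unique:
  fixes f g :: "'a::comm_ring_1 fps"
  assumes "f $ 0 = 1" "f * g = 1"
  shows "g = fps_right_inverse f 1"
proof -
  have "f * fps_right_inverse f 1 = 1" using assms by (simp add: fps_right_inverse)
  hence "g = g * (f * fps_right_inverse f 1)" by simp
  also have "\<dots> = (f * g) * fps_right_inverse f 1" by (simp add: algebra_simps)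
  finally show ?thesis using assms by simp
qed

lemma ev_rinv:
  assumes "f $ 0 = 1"
  shows "ev (fps_right_inverse f 1) = fps_right_inverse (ev f) 1"
proof (rule rinv_unique)
  show "ev f $ 0 = 1" using assms by simp
  have "f * fps_right_inverse f 1 = 1" using assms by (simp add: fps_right_inverse)
  hence "ev (f * fps_right_inverse f 1) = 1" by simp
  thus "ev f * ev (fps_right_inverse f 1) = 1" by simp
qed

lemma poly_tvar_pow: "poly (tvar ^ k) (-1) = (-1) ^ k"
  by (simp add: tvar_def poly_power)



definition Qf :: "'a::comm_ring_1 \<Rightarrow> nat \<Rightarrow> 'a" where
  "Qf y N = 1 + (y^N)^2*y + (y^N)^4*y^4 + (y^N)^2*y^3 - (y^N)*y - (y^N)*y^2 - (y^N)^3*y^3 - (y^N)^3*y^4"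

definition sf :: "'a::comm_ring_1 \<Rightarrow> nat \<Rightarrow> 'a" where
  "sf y p = y^(p^2)*((1-y^p*y)*(1-y^p*y^2)*(1-(y^p)^4*y^6))"

lemma alg: "(1-z*y)*(1-z*y^2)*(1-z^4*y^6) = 
   (1 + z^2*y + z^4*y^4 + z^2*y^3 - z*y - z*y^2 - z^3*y^3 - z^3*y^4)
   - (z^2*y) * (1 + (z*y)^2*y + (z*y)^4*y^4 + (z*y)^2*y^3 - (z*y)*y - (z*y)*y^2 - (z*y)^3*y^3 - (z*y)^3*y^4)"
  for z y :: "'a::comm_ring_1"
  by (simp add: algebra_simps power2_eq_square power3_eq_cube power_numeral_reduce)

lemma step_id:
  fixes y :: "'a::comm_ring_1"
  shows "sf y N = y^(N^2)*Qf y N - y^((Suc N)^2)*Qf y (Suc N)"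
proof -
  have e: "y^((Suc N)^2) = y^(N^2) * ((y^N)^2 * y)"
    by (simp add: power2_eq_square power_add power_mult algebra_simps)
  have "Qf y (Suc N) = (1 + (y^N*y)^2*y + (y^N*y)^4*y^4 + (y^N*y)^2*y^3 - (y^N*y)*y - (y^N*y)*y^2 - (y^N*y)^3*y^3 - (y^N*y)^3*y^4)"
    unfolding Qf_def by (simp only: power_Suc2)
  hence "(1-y^N*y)*(1-y^N*y^2)*(1-(y^N)^4*y^6) = Qf y N - ((y^N)^2 * y) * Qf y (Suc N)"
    unfolding Qf_def using alg[of "y^N" y] by (simp only:)
  thus ?thesis unfolding sf_def e by (simp only: right_diff_distrib mult.assoc)
qed

lemma tele:
  fixes y :: "'a::comm_ring_1"
  shows "(\<Sum>p<N. sf y p) = 1 - y^2 - y^(N^2) * Qf y N"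
proof (induction N)
  case 0
  have "Qf y 0 = 1 - y^2" unfolding Qf_def by (simp add: algebra_simps power2_eq_square power3_eq_cube power_numeral_reduce)
  then show ?case by simp
next
  case (Suc N)
  then show ?case by (simp add: step_id)
qed


lemma inv1:
  assumes "k > 0"
  shows "(1 - fps_X^k :: int fps) * fps_right_inverse (1 - fps_X^k) 1 = 1"
  by (rule fps_right_inverse) (use assms in simp)

lemma prodD:
  "(1-fps_X^2)*(1-fps_X^4) * (\<Prod>j\<in>{1..p}. (1 - fps_X^(2*j+4)) * fps_right_inverse (1 - fps_X^(2*j)) 1)
   = (1-fps_X^(2*p+2))*(1-fps_X^(2*p+4) :: int fps)"
proof (induction p)
  case 0
  have "{1..0::nat} = {}" by simp
  then show ?case by (simp only: prod.empty mult_1_right mult_0_right add_0)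
next
  case (Suc p)
  have i: "(1 - fps_X^(2*p+2) :: int fps) * fps_right_inverse (1 - fps_X^(2*p+2)) 1 = 1"
    by (rule inv1) simp
  have ps: "(\<Prod>j\<in>{1..Suc p}. f j) = (\<Prod>j\<in>{1..p}. f j) * f (Suc p)" for f :: "nat \<Rightarrow> int fps"
    by (simp add: prod.cl_ivl_Suc)
  have e1: "2*Suc p+4 = 2*p+6" "2*Suc p = 2*p+2" "2*Suc p + 2 = 2*p+4" "2*p+2+4 = 2*p+6" "2*p+2+2 = 2*p+4" by simp_all
  have "(1-fps_X^2)*(1-fps_X^4) * (\<Prod>j\<in>{1..Suc p}. (1 - fps_X^(2*j+4)) * fps_right_inverse (1 - fps_X^(2*j)) 1)
     = ((1-fps_X^2)*(1-fps_X^4) * (\<Prod>j\<in>{1..p}. (1 - fps_X^(2*j+4)) * fps_right_inverse (1 - fps_X^(2*j)) 1))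
       * ((1 - fps_X^(2*p+6)) * fps_right_inverse (1 - fps_X^(2*p+2)) (1::int))"
    by (subst ps) (simp only: e1 mult.assoc)
  also have "\<dots> = (1-fps_X^(2*p+2))*(1-fps_X^(2*p+4)) * ((1 - fps_X^(2*p+6)) * fps_right_inverse (1 - fps_X^(2*p+2)) 1)"
    by (simp only: Suc.IH)
  also have "\<dots> = ((1 - fps_X^(2*p+2)) * fps_right_inverse (1 - fps_X^(2*p+2)) 1) * ((1-fps_X^(2*p+4)) * (1 - fps_X^(2*p+6)))"
    by (simp only: ac_simps)
  also have "\<dots> = (1-fps_X^(2*Suc p+2))*(1-fps_X^(2*Suc p+4))"
    by (simp only: i e1 mult_1_left)
  finally show ?case .
qed

definition Ef :: "nat \<Rightarrow> int fps" where
  "Ef p = (1 - fps_X^(8*p+12)) * (\<Prod>j\<in>{1..p}. (1 - fps_X^(2*j+4)) * fps_right_inverse (1 - fps_X^(2*j)) 1)"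

lemma evK: "ev (Kterm p) = fps_X^(2*p^2) * Ef p"
proof -
  have c1: "ev (fps_const (tvar ^ (2 * p * (p - 1)))) = 1"
    by (simp add: tvar_def poly_power power_mult)
  have c2: "ev (fps_const (tvar ^ (8 * p + 5))) = -1"
    by (simp add: tvar_def poly_power power_add power_mult)
  have c3: "ev ((1 + fps_const (tvar ^ (2 * j + 1)) * fps_X ^ (2 * j + 4))
          * fps_right_inverse (1 - fps_const (tvar ^ (2 * j)) * fps_X ^ (2 * j)) 1)
        = (1 - fps_X^(2*j+4)) * fps_right_inverse (1 - fps_X^(2*j)) 1" if "j \<in> {1..p}" for j
  proof -
    have "ev (fps_right_inverse (1 - fps_const (tvar ^ (2 * j)) * fps_X ^ (2 * j)) 1)
        = fps_right_inverse (ev (1 - fps_const (tvar ^ (2 * j)) * fps_X ^ (2 * j))) 1"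
      by (rule ev_rinv) (use that in simp)
    moreover have "ev (fps_const (tvar ^ (2 * j))) = 1"
      by (simp add: tvar_def poly_power power_mult)
    moreover have "ev (fps_const (tvar ^ (2 * j + 1))) = -1"
      by (simp add: tvar_def poly_power power_add power_mult)
    ultimately show ?thesis by (simp only: ev_mult ev_add ev_diff ev_one ev_X ev_power) simp
  qed
  have c4: "ev (\<Prod>j\<in>{1..p}. (1 + fps_const (tvar ^ (2 * j + 1)) * fps_X ^ (2 * j + 4))
          * fps_right_inverse (1 - fps_const (tvar ^ (2 * j)) * fps_X ^ (2 * j)) 1)
        = (\<Prod>j\<in>{1..p}. (1 - fps_X^(2*j+4)) * fps_right_inverse (1 - fps_X^(2*j)) 1)"
    unfolding ev_prod by (rule prod.cong[OF refl c3])
  show ?thesis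
    unfolding Kterm_def Ef_def ev_mult c4 ev_add ev_one c1 c2 ev_power ev_X
    by (simp add: ac_simps)
qed

lemma sfX: "sf (fps_X^2 :: int fps) p = fps_X^(2*p^2)*((1-fps_X^(2*p+2))*(1-fps_X^(2*p+4))*(1-fps_X^(8*p+12)))"
proof -
  have a: "(fps_X^2::int fps)^(p^2) = fps_X^(2*p^2)" by (simp add: power_mult)
  have b: "(fps_X^2::int fps)^p * fps_X^2 = fps_X^(2*p+2)" by (simp add: power_mult[symmetric] power_add[symmetric])
  have c: "(fps_X^2::int fps)^p * (fps_X^2)^2 = fps_X^(2*p+4)" by (simp add: power_mult[symmetric] power_add[symmetric])
  have d: "((fps_X^2::int fps)^p)^4 * (fps_X^2)^6 = fps_X^(8*p+12)" by (simp add: power_mult[symmetric] power_add[symmetric])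
  show ?thesis unfolding sf_def a b c d ..
qed

lemma DK: "(1-fps_X^2)*(1-fps_X^4) * ev (Kterm p) = sf (fps_X^2) p"
proof -
  have "(1-fps_X^2)*(1-fps_X^4) * ev (Kterm p) = fps_X^(2*p^2) * (1 - fps_X^(8*p+12)) *
     ((1-fps_X^2)*(1-fps_X^4) * (\<Prod>j\<in>{1..p}. (1 - fps_X^(2*j+4)) * fps_right_inverse (1 - fps_X^(2*j)) 1))"
    unfolding evK Ef_def by (simp only: ac_simps)
  also have "\<dots> = sf (fps_X^2) p" unfolding prodD sfX by (simp only: ac_simps)
  finally show ?thesis .
qed

lemma prefix:
  fixes A B D :: "'a::comm_ring_1 fps"
  assumes "\<And>m. m \<le> n \<Longrightarrow> A$m = B$m"
  shows "(D*A)$n = (D*B)$n"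
  unfolding fps_mult_nth using assms by (intro sum.cong) auto

theorem mainTheorem12:
  shows "K_at_minus1 = fps_right_inverse (1 - fps_X ^ 2 :: int fps) 1"
proof -
  define D :: "int fps" where "D = (1-fps_X^2)*(1-fps_X^4)"
  define G :: "int fps" where "G = fps_right_inverse (1 - fps_X ^ 2 :: int fps) 1"
  have DG: "D * G = 1 - fps_X^4"
  proof -
    have "D * G = (1-fps_X^4) * ((1-fps_X^2) * G)" unfolding D_def by (simp only: ac_simps)
    also have "(1-fps_X^2) * G = 1" unfolding G_def by (rule inv1) simp
    finally show ?thesis by simp
  qed
  have KT: "K_at_minus1 $ m = (\<Sum>p\<le>m. ev (Kterm p) $ m)" for m
    unfolding K_at_minus1_def K_def by (simp add: poly_sum)
  have DKn: "(D * K_at_minus1) $ n = (1 - fps_X^4) $ n" for n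
  proof -
    let ?F = "\<Sum>p<Suc n. ev (Kterm p)"
    have "(D * K_at_minus1) $ n = (D * ?F) $ n"
    proof (rule prefix)
      fix m assume m: "m \<le> n"
      have "?F $ m = (\<Sum>p<Suc n. ev (Kterm p) $ m)" by (simp add: fps_sum_nth)
      also have "\<dots> = (\<Sum>p\<le>m. ev (Kterm p) $ m)"
      proof (rule sum.mono_neutral_right)
        show "finite {..<Suc n}" by simp
        show "{..m} \<subseteq> {..<Suc n}" using m by auto
        show "\<forall>i\<in>{..<Suc n} - {..m}. ev (Kterm i) $ m = 0"
        proof
          fix i assume "i \<in> {..<Suc n} - {..m}"
          hence "m < i" by auto
          also have "i \<le> 2*i^2" by (simp add: power2_eq_square)
          finally have "m < 2*i^2" .
          thus "ev (Kterm i) $ m = 0" unfolding evK by (simp add: fps_X_power_mult_nth)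
        qed
      qed
      finally show "K_at_minus1 $ m = ?F $ m" unfolding KT by simp
    qed
    also have "D * ?F = (\<Sum>p<Suc n. sf (fps_X^2) p)"
      unfolding D_def sum_distrib_left DK ..
    also have "\<dots> = 1 - fps_X^4 - fps_X^(2*(Suc n)^2) * Qf (fps_X^2) (Suc n)"
      unfolding tele by (simp add: power_mult[symmetric])
    also have "\<dots> $ n = (1 - fps_X^4) $ n"
    proof -
      have "n < 2*(Suc n)^2" by (simp add: power2_eq_square)
      thus ?thesis by (simp add: fps_X_power_mult_nth)
    qed
    finally show ?thesis .
  qed
  have "D * K_at_minus1 = D * G" using DKn DG by (simp add: fps_eq_iff)
  moreover have "D \<noteq> 0"
  proof
    assume "D = 0" hence "D $ 0 = 0" by simp
    thus False unfolding D_def by simp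
  qed
  ultimately show ?thesis unfolding G_def by simp
qed

end
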